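(* Let $\Phi$ be a Young function and let $\varphi\in\mathcal{G}^{\rm dec}_1$. Let $\psi:\mathbb{R}^n\to\mathbb{R}^n$ be a measurable nonsingular transformation. Assume that $\psi$ is Lipschitz with constant $L>0$, i.e. $|\psi(x)-\psi(y)|\le L|x-y|$ for all $x,y\in\mathbb{R}^n$, and that there is a constant $K>0$ such that $|\psi^{-1}(A)|\le K|A|$ for all measurable sets $A\subset\mathbb{R}^n$. Then $C_\psi$ is bounded on $\mathcal{M}_\Phi^\varphi(\mathbb{R}^n)$; more precisely, there exist constants $C_1,C_2>0$ such that \[ \|C_\psi f\|_{\mathcal{M}_\Phi^\varphi}\le K\bigl(C_1+C_2\varphi(L)L^n\bigr)\|f\|_{\mathcal{M}_\Phi^\varphi}\quad\text{for all } f\in\mathcal{M}_\Phi^\varphi(\mathbb{R}^n). \]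
   Context: A Young function is a convex function $\Phi:[0,\infty)\to[0,\infty)$ with $\Phi(0)=0$ and $\lim_{t\to\infty}\Phi(t)=\infty$. A function $\varphi:(0,\infty)\to(0,\infty)$ is almost decreasing if there is $C>0$ with $C\varphi(r)\ge\varphi(s)$ whenever $0<r<s$; it is submultiplicative if there is $C>0$ with $\varphi(rs)\le C\varphi(r)\varphi(s)$ for all $r,s>0$. $\mathcal{G}^{\rm dec}_1$ denotes the set of almost decreasing submultiplicative functions $\varphi:(0,\infty)\to(0,\infty)$. A measurable map $\psi$ is nonsingular if $|\psi^{-1}(A)|=0$ whenever $|A|=0$; $C_\psi f=f\circ\psi$. For a ball $B=B(a,r)$ (open ball of center $a$, radius $r$), $\|f\|_{\Phi,B}=\inf\{\lambda>0:\frac1{|B|}\int_B\Phi(|f(x)|/\lambda)\,dx\le1\}$, and $\mathcal{M}_\Phi^\varphi(\mathbb{R}^n)$ is the set of measurable $f$ with $\|f\|_{\mathcal{M}_\Phi^\varphi}=\sup_{a\in\mathbb{R}^n,r>0}\frac1{\varphi(r)}\|f\|_{\Phi,B(a,r)}<\infty$ (Orlicz–Morrey space). *)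

theory Defs
  imports "HOL-Analysis.Analysis"
begin

definition young_function :: "(real \<Rightarrow> real) \<Rightarrow> bool" where
  "young_function \<Phi> \<longleftrightarrow> convex_on {0..} \<Phi> \<and> \<Phi> 0 = 0 \<and>
     (\<forall>t\<ge>0. \<Phi> t \<ge> 0) \<and> filterlim \<Phi> at_top at_top"

definition almost_decreasing :: "(real \<Rightarrow> real) \<Rightarrow> bool" where
  "almost_decreasing \<phi> \<longleftrightarrow> (\<exists>C>0. \<forall>r s. 0 < r \<and> r < s \<longrightarrow> \<phi> s \<le> C * \<phi> r)"

definition submultiplicative :: "(real \<Rightarrow> real) \<Rightarrow> bool" where
  "submultiplicative \<phi> \<longleftrightarrow> (\<exists>C>0. \<forall>r>0. \<forall>s>0. \<phi> (r * s) \<le> C * \<phi> r * \<phi> s)"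

definition G_dec_1 :: "(real \<Rightarrow> real) set" where
  "G_dec_1 = {\<phi>. (\<forall>r>0. \<phi> r > 0) \<and> almost_decreasing \<phi> \<and> submultiplicative \<phi>}"

definition nonsingular :: "('a::euclidean_space \<Rightarrow> 'a) \<Rightarrow> bool" where
  "nonsingular \<psi> \<longleftrightarrow> (\<forall>A \<in> sets lebesgue. emeasure lebesgue A = 0 \<longrightarrow> emeasure lebesgue (\<psi> -` A) = 0)"

text \<open>Luxemburg norm on a ball; Inf of the empty set is infinity in ennreal.\<close>
definition orlicz_ball_norm :: "(real \<Rightarrow> real) \<Rightarrow> ('a::euclidean_space \<Rightarrow> real) \<Rightarrow> 'a set \<Rightarrow> ennreal" where
  "orlicz_ball_norm \<Phi> f B = Inf {ennreal t | t. t > 0 \<and>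
      (\<integral>\<^sup>+ x \<in> B. ennreal (\<Phi> (\<bar>f x\<bar> / t)) \<partial>lebesgue) \<le> emeasure lebesgue B}"

definition orlicz_morrey_norm :: "(real \<Rightarrow> real) \<Rightarrow> (real \<Rightarrow> real) \<Rightarrow> ('a::euclidean_space \<Rightarrow> real) \<Rightarrow> ennreal" where
  "orlicz_morrey_norm \<Phi> \<phi> f = (SUP ar \<in> UNIV \<times> {0<..}.
      ennreal (1 / \<phi> (snd ar)) * orlicz_ball_norm \<Phi> f (ball (fst ar) (snd ar)))"

definition orlicz_morrey_space :: "(real \<Rightarrow> real) \<Rightarrow> (real \<Rightarrow> real) \<Rightarrow> ('a::euclidean_space \<Rightarrow> real) set" where
  "orlicz_morrey_space \<Phi> \<phi> = {f. f \<in> borel_measurable lebesgue \<and> orlicz_morrey_norm \<Phi> \<phi> f < \<infinity>}"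

end

theory Submission
  imports Defs
begin

lemma unit_ball_meas: "\<exists>u>0. emeasure lebesgue (ball (0::'a::euclidean_space) 1) = ennreal u"
proof -
  have e: "emeasure lebesgue (ball (0::'a) 1) = emeasure lborel (ball (0::'a) 1)"
    by (simp add: emeasure_completion)
  have "emeasure lborel (ball (0::'a) 1) = ennreal (measure lborel (ball (0::'a) 1))"
    using emeasure_lborel_ball_finite[of "0::'a" 1] by (intro emeasure_eq_ennreal_measure) auto
  moreover have p: "measure lborel (ball (0::'a) 1) > 0" by (rule content_ball_pos) simp
  ultimately show ?thesis using e by (intro exI[of _ "measure lborel (ball (0::'a) 1)"]) auto
qed

lemma Inf_cmult_le:
  fixes S S' :: "ennreal set" and c :: real
  assumes c: "c > 0" and sub: "\<And>t. t > 0 \<Longrightarrow> ennreal t \<in> S' \<Longrightarrow> ennreal (c * t) \<in> S"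
    and S': "S' \<subseteq> {ennreal t | t. t > 0}"
  shows "Inf S \<le> ennreal c * Inf S'"
proof (cases "S' = {}")
  case True
  then show ?thesis using c by (simp add: ennreal_mult_top)
next
  case False
  have m: "mono (\<lambda>x::ennreal. ennreal c * x)" by (simp add: mono_def mult_left_mono)
  have ct: "continuous (at_right (Inf S')) (\<lambda>x::ennreal. ennreal c * x)"
  proof -
    have "continuous_on UNIV (\<lambda>x::ennreal. ennreal c * x)"
      by (rule ennreal_continuous_on_cmult) (auto intro: continuous_on_id)
    then show ?thesis
      by (metis UNIV_I continuous_on_eq_continuous_within continuous_within_subset subset_UNIV)
  qed
  have "Inf S \<le> Inf ((\<lambda>x. ennreal c * x) ` S')"
  proof (rule Inf_mono)
    fix y assume "y \<in> (\<lambda>x. ennreal c * x) ` S'"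
    then obtain t where t: "t > 0" "ennreal t \<in> S'" "y = ennreal c * ennreal t" using S' by blast
    then have "y \<in> S" using sub[OF t(1,2)] c by (simp add: ennreal_mult)
    then show "\<exists>x\<in>S. x \<le> y" by blast
  qed
  also have "\<dots> = ennreal c * Inf S'"
    using continuous_at_Inf_mono[OF m ct False] by simp
  finally show ?thesis .
qed
lemma young_scale:
  assumes Y: "young_function \<Phi>" and "0 \<le> \<theta>" "\<theta> \<le> 1" "0 \<le> s"
  shows "\<Phi> (\<theta> * s) \<le> \<theta> * \<Phi> s"
proof -
  have cv: "convex_on {0..} \<Phi>" and z: "\<Phi> 0 = 0" using Y unfolding young_function_def by blast+
  have "\<Phi> ((1 - \<theta>) *\<^sub>R 0 + \<theta> *\<^sub>R s) \<le> (1 - \<theta>) * \<Phi> 0 + \<theta> * \<Phi> s"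
    by (rule convex_onD[OF cv]) (use assms in auto)
  then show ?thesis using z by simp
qed

lemma young_mono:
  assumes Y: "young_function \<Phi>" and "0 \<le> a" "a \<le> b"
  shows "\<Phi> a \<le> \<Phi> b"
proof (cases "b = 0")
  case True then show ?thesis using assms by simp
next
  case False
  then have b: "b > 0" using assms by simp
  have "\<Phi> ((a/b) * b) \<le> (a/b) * \<Phi> b"
    by (rule young_scale[OF Y]) (use assms b in auto)
  also have "\<dots> \<le> \<Phi> b"
  proof -
    have nn: "\<forall>t\<ge>0. \<Phi> t \<ge> 0" using Y unfolding young_function_def by blast
    have "\<Phi> b \<ge> 0" using nn b by simp
    moreover have "a / b \<ge> 0" using assms b by auto
    moreover have "a / b \<le> 1" using assms b by auto
    ultimately show ?thesis by (rule mult_left_le_one_le)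
  qed
  finally show ?thesis using b by simp
qed

lemma young_meas:
  assumes Y: "young_function \<Phi>" and f: "f \<in> borel_measurable M" and t: "t \<ge> 0"
  shows "(\<lambda>y. ennreal (\<Phi> (\<bar>f y\<bar> / t))) \<in> borel_measurable M"
proof -
  have "mono (\<lambda>s. \<Phi> (max 0 s))"
  proof (rule monoI)
    fix x y :: real assume "x \<le> y"
    then show "\<Phi> (max 0 x) \<le> \<Phi> (max 0 y)" by (intro young_mono[OF Y]) auto
  qed
  then have m: "(\<lambda>s. \<Phi> (max 0 s)) \<in> borel_measurable borel" by (rule borel_measurable_mono)
  have "(\<lambda>y. \<Phi> (max 0 (\<bar>f y\<bar> / t))) \<in> borel_measurable M"
  proof -
    have "(\<lambda>y. \<bar>f y\<bar> / t) \<in> borel_measurable M" using f by simp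
    from measurable_compose[OF this m] show ?thesis by (simp add: o_def)
  qed
  moreover have "(\<lambda>y. \<Phi> (max 0 (\<bar>f y\<bar> / t))) = (\<lambda>y. \<Phi> (\<bar>f y\<bar> / t))"
    using t by (intro ext) (simp add: max_def)
  ultimately show ?thesis by simp
qed

lemma ball_step:
  fixes \<psi> :: "'a::euclidean_space \<Rightarrow> 'a" and f :: "'a \<Rightarrow> real"
  assumes Y: "young_function \<Phi>" and fm: "f \<in> borel_measurable lebesgue"
    and psim: "\<psi> \<in> lebesgue \<rightarrow>\<^sub>M lebesgue"
    and lip: "\<forall>x y. dist (\<psi> x) (\<psi> y) \<le> L * dist x y"
    and Kb: "\<forall>A \<in> sets lebesgue. emeasure lebesgue (\<psi> -` A) \<le> ennreal K * emeasure lebesgue A"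
    and L: "L > 0" and K: "K > 0" and r: "r > 0" and t: "t > 0"
    and c1: "K * L ^ DIM('a) \<ge> 1"
    and u: "u > 0" "emeasure lebesgue (ball (0::'a) 1) = ennreal u"
    and hyp: "(\<integral>\<^sup>+ y \<in> ball (\<psi> a) (L*r). ennreal (\<Phi> (\<bar>f y\<bar> / t)) \<partial>lebesgue)
              \<le> emeasure lebesgue (ball (\<psi> a) (L*r))"
  shows "(\<integral>\<^sup>+ x \<in> ball a r. ennreal (\<Phi> (\<bar>(f \<circ> \<psi>) x\<bar> / (K * L ^ DIM('a) * t))) \<partial>lebesgue)
          \<le> emeasure lebesgue (ball a r)"
proof -
  define c where "c = K * L ^ DIM('a)"
  define B' where "B' = ball (\<psi> a) (L*r)"
  define g where "g = (\<lambda>y. ennreal (\<Phi> (\<bar>f y\<bar> / t)) * indicator B' y)"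
  have c: "c \<ge> 1" using c1 by (simp add: c_def)
  have gm: "g \<in> borel_measurable lebesgue"
    unfolding g_def B'_def
    by (intro borel_measurable_times_ennreal borel_measurable_indicator) (use young_meas[OF Y fm, of t] t in auto)
  have gpm: "(\<lambda>x. g (\<psi> x)) \<in> borel_measurable lebesgue"
    using measurable_compose[OF psim gm] by (simp add: o_def)
  have pt: "ennreal (\<Phi> (\<bar>(f \<circ> \<psi>) x\<bar> / (c * t))) * indicator (ball a r) x \<le> ennreal (1/c) * g (\<psi> x)" for x
  proof (cases "x \<in> ball a r")
    case True
    have "dist (\<psi> a) (\<psi> x) \<le> L * dist a x" using lip by blast
    also have "\<dots> < L * r" using True L by (simp)
    finally have inB: "\<psi> x \<in> B'" by (simp add: B'_def)
    have "\<Phi> ((1/c) * (\<bar>f (\<psi> x)\<bar> / t)) \<le> (1/c) * \<Phi> (\<bar>f (\<psi> x)\<bar> / t)"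
      by (rule young_scale[OF Y]) (use c t in auto)
    then have "\<Phi> (\<bar>(f \<circ> \<psi>) x\<bar> / (c * t)) \<le> (1/c) * \<Phi> (\<bar>f (\<psi> x)\<bar> / t)"
      by (simp add: o_def)
    then have "ennreal (\<Phi> (\<bar>(f \<circ> \<psi>) x\<bar> / (c * t))) \<le> ennreal ((1/c) * \<Phi> (\<bar>f (\<psi> x)\<bar> / t))"
      by (rule ennreal_leI)
    also have "\<dots> = ennreal (1/c) * ennreal (\<Phi> (\<bar>f (\<psi> x)\<bar> / t))"
      by (rule ennreal_mult') (use c in simp)
    finally show ?thesis using True inB by (simp add: g_def)
  qed simp
  have "(\<integral>\<^sup>+ x \<in> ball a r. ennreal (\<Phi> (\<bar>(f \<circ> \<psi>) x\<bar> / (c * t))) \<partial>lebesgue)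
        \<le> (\<integral>\<^sup>+ x. ennreal (1/c) * g (\<psi> x) \<partial>lebesgue)"
    by (rule nn_integral_mono) (use pt in auto)
  also have "\<dots> = ennreal (1/c) * (\<integral>\<^sup>+ x. g (\<psi> x) \<partial>lebesgue)"
    by (rule nn_integral_cmult[OF gpm])
  finally have I0: "(\<integral>\<^sup>+ x \<in> ball a r. ennreal (\<Phi> (\<bar>(f \<circ> \<psi>) x\<bar> / (c * t))) \<partial>lebesgue)
        \<le> ennreal (1/c) * (\<integral>\<^sup>+ x. g (\<psi> x) \<partial>lebesgue)" .
  have "(\<integral>\<^sup>+ x. g (\<psi> x) \<partial>lebesgue) = (\<integral>\<^sup>+ y. g y \<partial>distr lebesgue lebesgue \<psi>)"
    by (rule nn_integral_distr[symmetric, OF psim]) (use gm in simp)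
  also have "\<dots> \<le> (\<integral>\<^sup>+ y. g y \<partial>scale_measure (ennreal K) lebesgue)"
  proof (rule nn_integral_mono_measure)
    show "sets (distr lebesgue lebesgue \<psi>) = sets (scale_measure (ennreal K) lebesgue)" by simp
    show "distr lebesgue lebesgue \<psi> \<le> scale_measure (ennreal K) lebesgue"
    proof -
      have "emeasure (distr lebesgue lebesgue \<psi>) A \<le> emeasure (scale_measure (ennreal K) lebesgue) A" for A
      proof (cases "A \<in> sets lebesgue")
        case True
        then show ?thesis using Kb psim by (simp add: emeasure_distr)
      next
        case False
        then show ?thesis by (simp add: emeasure_notin_sets)
      qed
      then show ?thesis unfolding le_measure_iff by (auto simp: space_scale_measure le_fun_def)
    qed
  qed
  also have "\<dots> = ennreal K * (\<integral>\<^sup>+ y. g y \<partial>lebesgue)"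
    by (rule nn_integral_scale_measure[OF gm])
  finally have J: "(\<integral>\<^sup>+ x. g (\<psi> x) \<partial>lebesgue) \<le> ennreal K * (\<integral>\<^sup>+ y. g y \<partial>lebesgue)" .
  have I1: "(\<integral>\<^sup>+ x \<in> ball a r. ennreal (\<Phi> (\<bar>(f \<circ> \<psi>) x\<bar> / (c * t))) \<partial>lebesgue)
        \<le> ennreal (1/c) * (ennreal K * (\<integral>\<^sup>+ y. g y \<partial>lebesgue))"
    using I0 mult_left_mono[OF J, of "ennreal (1/c)"] by (rule order_trans) simp
  define X where "X = (L*r) ^ DIM('a)"
  have X: "X \<ge> 0" using L r by (simp add: X_def)
  have I2: "(\<integral>\<^sup>+ y. g y \<partial>lebesgue) \<le> ennreal X * ennreal u"
  proof -
    have "(\<integral>\<^sup>+ y. g y \<partial>lebesgue) \<le> emeasure lebesgue B'"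
      using hyp by (simp add: g_def B'_def)
    also have "emeasure lebesgue B' = ennreal X * emeasure lebesgue (ball (0::'a) 1)"
      unfolding B'_def X_def by (rule emeasure_lebesgue_ball_conv_unit_ball) (use L r in simp)
    finally show ?thesis by (simp only: u(2))
  qed
  have I3: "ennreal (1/c) * (ennreal K * (\<integral>\<^sup>+ y. g y \<partial>lebesgue))
      \<le> ennreal (1/c) * (ennreal K * (ennreal X * ennreal u))"
    by (intro mult_left_mono I2) simp_all
  have e1: "ennreal (X*u) = ennreal X * ennreal u" by (rule ennreal_mult) (use X u in auto)
  have e2: "ennreal (K*(X*u)) = ennreal K * ennreal (X*u)" by (rule ennreal_mult) (use X u K in auto)
  have e3: "ennreal (1/c*(K*(X*u))) = ennreal (1/c) * ennreal (K*(X*u))"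
    by (rule ennreal_mult) (use X u K c in auto)
  have Lp: "L ^ DIM('a) > 0" using L by simp
  have re: "1/c*(K*(X*u)) = r ^ DIM('a) * u"
    unfolding c_def X_def power_mult_distrib using K Lp L by (simp add: field_simps)
  have e4: "emeasure lebesgue (ball a r) = ennreal (r ^ DIM('a)) * emeasure lebesgue (ball (0::'a) 1)"
    by (rule emeasure_lebesgue_ball_conv_unit_ball) (use r in simp)
  have e5: "ennreal (r ^ DIM('a) * u) = ennreal (r ^ DIM('a)) * ennreal u"
    by (rule ennreal_mult) (use r u in auto)
  have "ennreal (1/c) * (ennreal K * (ennreal X * ennreal u)) = emeasure lebesgue (ball a r)"
    unfolding e4 u(2) e5[symmetric] re[symmetric] e3 e2 e1 ..
  then have "(\<integral>\<^sup>+ x \<in> ball a r. ennreal (\<Phi> (\<bar>(f \<circ> \<psi>) x\<bar> / (c * t))) \<partial>lebesgue)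
          \<le> emeasure lebesgue (ball a r)"
    using order_trans[OF I1 I3] by simp
  then show ?thesis by (simp only: c_def)
qed

theorem theorem1p7:
  fixes \<Phi> \<phi> :: "real \<Rightarrow> real"
  assumes "young_function \<Phi>" and "\<phi> \<in> G_dec_1"
  shows "\<exists>C1>0. \<exists>C2>0. \<forall>(\<psi>::'a::euclidean_space \<Rightarrow> 'a) (L::real) (K::real).
     \<psi> \<in> lebesgue \<rightarrow>\<^sub>M lebesgue \<and> nonsingular \<psi> \<and> L > 0 \<and> K > 0 \<and>
     (\<forall>x y. dist (\<psi> x) (\<psi> y) \<le> L * dist x y) \<and>
     (\<forall>A \<in> sets lebesgue. emeasure lebesgue (\<psi> -` A) \<le> ennreal K * emeasure lebesgue A)
     \<longrightarrow> (\<forall>f \<in> orlicz_morrey_space \<Phi> \<phi>.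
            f \<circ> \<psi> \<in> orlicz_morrey_space \<Phi> \<phi> \<and>
            orlicz_morrey_norm \<Phi> \<phi> (f \<circ> \<psi>)
              \<le> ennreal (K * (C1 + C2 * \<phi> L * L ^ DIM('a))) * orlicz_morrey_norm \<Phi> \<phi> f)"
proof -
  note Y = assms(1)
  have \<phi>pos: "\<And>r. r > 0 \<Longrightarrow> \<phi> r > 0" using assms(2) by (auto simp: G_dec_1_def)
  obtain C0 where C0: "C0 > 0" and sm: "\<And>r s. r > 0 \<Longrightarrow> s > 0 \<Longrightarrow> \<phi> (r * s) \<le> C0 * \<phi> r * \<phi> s"
    using assms(2) by (auto simp: G_dec_1_def submultiplicative_def)
  obtain u where u: "u > 0" "emeasure lebesgue (ball (0::'a) 1) = ennreal u"
    using unit_ball_meas by blast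
  have main: "f \<circ> \<psi> \<in> orlicz_morrey_space \<Phi> \<phi> \<and>
            orlicz_morrey_norm \<Phi> \<phi> (f \<circ> \<psi>)
              \<le> ennreal (K * (1 + C0 * \<phi> L * L ^ DIM('a))) * orlicz_morrey_norm \<Phi> \<phi> f"
    if H: "\<psi> \<in> lebesgue \<rightarrow>\<^sub>M lebesgue \<and> nonsingular \<psi> \<and> L > 0 \<and> K > 0 \<and>
     (\<forall>x y. dist (\<psi> x) (\<psi> y) \<le> L * dist x y) \<and>
     (\<forall>A \<in> sets lebesgue. emeasure lebesgue (\<psi> -` A) \<le> ennreal K * emeasure lebesgue A)"
      and fS: "f \<in> orlicz_morrey_space \<Phi> \<phi>"
    for \<psi> :: "'a \<Rightarrow> 'a" and L K :: real and f
  proof -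
    have psim: "\<psi> \<in> lebesgue \<rightarrow>\<^sub>M lebesgue" and L: "L > 0" and K: "K > 0"
      and lip: "\<forall>x y. dist (\<psi> x) (\<psi> y) \<le> L * dist x y"
      and Kb: "\<forall>A \<in> sets lebesgue. emeasure lebesgue (\<psi> -` A) \<le> ennreal K * emeasure lebesgue A"
      using H by auto
    have fm: "f \<in> borel_measurable lebesgue" and Mfin: "orlicz_morrey_norm \<Phi> \<phi> f < \<infinity>"
      using fS by (auto simp: orlicz_morrey_space_def)
    define M where "M = orlicz_morrey_norm \<Phi> \<phi> f"
    define c where "c = K * L ^ DIM('a)"
    have c1: "c \<ge> 1"
    proof -
      have sub: "ball (0::'a) 1 \<subseteq> \<psi> -` ball (\<psi> 0) L"
      proof
        fix x :: 'a assume "x \<in> ball 0 1"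
        then have "dist 0 x < 1" by simp
        have "dist (\<psi> 0) (\<psi> x) \<le> L * dist 0 x" using lip by blast
        also have "\<dots> < L * 1" using \<open>dist 0 x < 1\<close> L by simp
        finally show "x \<in> \<psi> -` ball (\<psi> 0) L" by simp
      qed
      have bs: "ball (\<psi> 0) L \<in> sets lebesgue" by simp
      have ps: "\<psi> -` ball (\<psi> 0) L \<in> sets lebesgue"
        using measurable_sets[OF psim bs] by simp
      have "ennreal u = emeasure lebesgue (ball (0::'a) 1)" using u by simp
      also have "\<dots> \<le> emeasure lebesgue (\<psi> -` ball (\<psi> 0) L)"
        by (rule emeasure_mono[OF sub ps])
      also have "\<dots> \<le> ennreal K * emeasure lebesgue (ball (\<psi> 0) L)"
        using Kb bs by blast
      also have "emeasure lebesgue (ball (\<psi> 0) L) = ennreal (L ^ DIM('a)) * emeasure lebesgue (ball (0::'a) 1)"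
        by (rule emeasure_lebesgue_ball_conv_unit_ball) (use L in simp)
      also have "ennreal K * (ennreal (L ^ DIM('a)) * emeasure lebesgue (ball (0::'a) 1)) = ennreal (c * u)"
        unfolding u(2) c_def using K L u by (simp add: ennreal_mult mult.assoc)
      finally have "u \<le> c * u"
        using K L u by (subst (asm) ennreal_le_iff) (auto simp: c_def)
      then show ?thesis using u by simp
    qed
    have cpos: "c > 0" using c1 by simp
    have Nb: "orlicz_ball_norm \<Phi> (f \<circ> \<psi>) (ball a r) \<le> ennreal c * orlicz_ball_norm \<Phi> f (ball (\<psi> a) (L*r))"
      if r: "r > 0" for a r
      unfolding orlicz_ball_norm_def
    proof (rule Inf_cmult_le[OF cpos])
      fix t :: real assume t: "t > 0"
        and tin: "ennreal t \<in> {ennreal t |t. 0 < t \<and> (\<integral>\<^sup>+ x \<in> ball (\<psi> a) (L*r). ennreal (\<Phi> (\<bar>f x\<bar> / t)) \<partial>lebesgue) \<le> emeasure lebesgue (ball (\<psi> a) (L*r))}"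
      then obtain t' where t': "t' > 0" "ennreal t = ennreal t'"
        "(\<integral>\<^sup>+ x \<in> ball (\<psi> a) (L*r). ennreal (\<Phi> (\<bar>f x\<bar> / t')) \<partial>lebesgue) \<le> emeasure lebesgue (ball (\<psi> a) (L*r))"
        by blast
      have "t = t'" using t t' by simp
      then have hyp: "(\<integral>\<^sup>+ x \<in> ball (\<psi> a) (L*r). ennreal (\<Phi> (\<bar>f x\<bar> / t)) \<partial>lebesgue) \<le> emeasure lebesgue (ball (\<psi> a) (L*r))"
        using t' by simp
      have "(\<integral>\<^sup>+ x \<in> ball a r. ennreal (\<Phi> (\<bar>(f \<circ> \<psi>) x\<bar> / (K * L ^ DIM('a) * t))) \<partial>lebesgue)
          \<le> emeasure lebesgue (ball a r)"
        by (rule ball_step[OF Y fm psim lip Kb L K r t _ u hyp]) (use c1 in \<open>simp add: c_def\<close>)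
      then show "ennreal (c * t) \<in> {ennreal t |t. 0 < t \<and> (\<integral>\<^sup>+ x \<in> ball a r. ennreal (\<Phi> (\<bar>(f \<circ> \<psi>) x\<bar> / t)) \<partial>lebesgue) \<le> emeasure lebesgue (ball a r)}"
        using cpos t by (auto simp: c_def)
    qed blast
    have Mb: "orlicz_ball_norm \<Phi> f (ball b s) \<le> ennreal (\<phi> s) * M" if s: "s > 0" for b s
    proof -
      have "ennreal (1 / \<phi> s) * orlicz_ball_norm \<Phi> f (ball b s) \<le> M"
        unfolding M_def orlicz_morrey_norm_def
        by (rule SUP_upper2[of "(b, s)"]) (use s in auto)
      then have "ennreal (\<phi> s) * (ennreal (1 / \<phi> s) * orlicz_ball_norm \<Phi> f (ball b s)) \<le> ennreal (\<phi> s) * M"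
        by (rule mult_left_mono) simp
      moreover have "ennreal (\<phi> s) * ennreal (1 / \<phi> s) = 1"
        using \<phi>pos[OF s] by (simp add: ennreal_mult[symmetric])
      ultimately show ?thesis by (simp add: mult.assoc[symmetric])
    qed
    have NB: "orlicz_morrey_norm \<Phi> \<phi> (f \<circ> \<psi>) \<le> ennreal (c * C0 * \<phi> L) * M"
      unfolding orlicz_morrey_norm_def
    proof (rule SUP_least)
      fix ar :: "'a \<times> real" assume "ar \<in> UNIV \<times> {0<..}"
      then obtain a r where ar: "ar = (a, r)" "r > 0" by (cases ar) auto
      have p1: "\<phi> r > 0" "\<phi> (L*r) > 0" "\<phi> L > 0" using \<phi>pos ar L by auto
      have h1: "orlicz_ball_norm \<Phi> f (ball (\<psi> a) (L*r)) \<le> ennreal (\<phi> (L*r)) * M"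
        using Mb[of "L*r" "\<psi> a"] ar L by simp
      have h2: "orlicz_ball_norm \<Phi> (f \<circ> \<psi>) (ball a r) \<le> ennreal c * (ennreal (\<phi> (L*r)) * M)"
        using order_trans[OF Nb[OF ar(2), of a] mult_left_mono[OF h1]] by simp
      have "ennreal (1 / \<phi> r) * orlicz_ball_norm \<Phi> (f \<circ> \<psi>) (ball a r)
            \<le> ennreal (1 / \<phi> r) * (ennreal c * (ennreal (\<phi> (L*r)) * M))"
        using h2 by (rule mult_left_mono) simp
      also have "\<dots> = ennreal ((1 / \<phi> r) * c * \<phi> (L*r)) * M"
      proof -
        have "ennreal ((1 / \<phi> r) * c * \<phi> (L*r)) = ennreal ((1 / \<phi> r) * c) * ennreal (\<phi> (L*r))"
          by (rule ennreal_mult'') (use p1 in simp)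
        also have "ennreal ((1 / \<phi> r) * c) = ennreal (1 / \<phi> r) * ennreal c"
          by (rule ennreal_mult'') (use cpos in simp)
        finally have e: "ennreal ((1 / \<phi> r) * c * \<phi> (L*r)) = ennreal (1 / \<phi> r) * ennreal c * ennreal (\<phi> (L*r))" .
        show ?thesis unfolding e by (simp only: mult.assoc)
      qed
      also have "\<dots> \<le> ennreal (c * C0 * \<phi> L) * M"
      proof (intro mult_right_mono ennreal_leI)
        have "(1 / \<phi> r) * c * \<phi> (L*r) \<le> (1 / \<phi> r) * c * (C0 * \<phi> L * \<phi> r)"
          using sm[OF L ar(2)] p1 cpos by (intro mult_left_mono) auto
        also have "\<dots> = c * C0 * \<phi> L" using p1 by (simp add: field_simps)
        finally show "(1 / \<phi> r) * c * \<phi> (L*r) \<le> c * C0 * \<phi> L" .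
      qed simp
      finally show "ennreal (1 / \<phi> (snd ar)) * orlicz_ball_norm \<Phi> (f \<circ> \<psi>) (ball (fst ar) (snd ar))
            \<le> ennreal (c * C0 * \<phi> L) * M" using ar by simp
    qed
    have cc: "c * C0 * \<phi> L \<le> K * (1 + C0 * \<phi> L * L ^ DIM('a))"
    proof -
      have "K * (1 + C0 * \<phi> L * L ^ DIM('a)) = K + c * C0 * \<phi> L"
        by (simp add: c_def algebra_simps)
      then show ?thesis using K by linarith
    qed
    have fin: "orlicz_morrey_norm \<Phi> \<phi> (f \<circ> \<psi>) \<le> ennreal (K * (1 + C0 * \<phi> L * L ^ DIM('a))) * M"
    proof -
      have "ennreal (c * C0 * \<phi> L) * M \<le> ennreal (K * (1 + C0 * \<phi> L * L ^ DIM('a))) * M"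
        by (rule mult_right_mono[OF ennreal_leI[OF cc]]) simp
      with NB show ?thesis by (rule order_trans)
    qed
    have lt1: "ennreal (K * (1 + C0 * \<phi> L * L ^ DIM('a))) < \<infinity>" by simp
    have lt: "ennreal (K * (1 + C0 * \<phi> L * L ^ DIM('a))) * M < \<infinity>"
      unfolding M_def using lt1 Mfin by (simp add: ennreal_mult_less_top)
    have meas: "f \<circ> \<psi> \<in> borel_measurable lebesgue"
      using measurable_comp[OF psim fm] .
    have "orlicz_morrey_norm \<Phi> \<phi> (f \<circ> \<psi>) < \<infinity>" using fin lt by (rule order.strict_trans1)
    then have "f \<circ> \<psi> \<in> orlicz_morrey_space \<Phi> \<phi>"
      using meas by (simp add: orlicz_morrey_space_def)
    then show ?thesis using fin unfolding M_def by (rule conjI)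
  qed
  show ?thesis
    apply (rule exI[of _ 1], rule conjI, simp)
    apply (rule exI[of _ C0], rule conjI, rule C0)
    apply (intro allI impI ballI)
    apply (rule main)
     apply assumption+
    done
qed

end
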